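(* Let $\mathcal A$ be a category of cubes. There is an isomorphism $\mathrm{sh}_\mathcal{A}\mathcal{L}_\mathcal{A}(!\{\tau\})\cong\mathbf{1}$, where $\mathbf 1$ is the terminal $\mathcal A$-set. Therefore, when $\Sigma=\{\tau\}$, the category of labelled $\mathcal{A}$-sets is equivalent to the category of unlabelled $\mathcal{A}$-sets.
   Context: $[0]=\{()\}$, $[n]=\{0,1\}^n$ ($n\ge1$) with the product order; ${\rm PoSet}$: posets with strictly increasing maps. Face maps $\delta_i^\alpha:[n-1]\to[n]$ insert $\alpha$ at position $i$; $\square$ is the subcategory of ${\rm PoSet}$ with objects $[n]$ generated by face maps; its presheaves are precubical sets. A map is adjacency-preserving if strictly increasing and it sends pairs at Hamming distance $1$ to pairs at Hamming distance $1$. A category of cubes is a subcategory $\mathcal A\subset{\rm PoSet}$ with objects $\{[n]:n\ge0\}$, containing $\square$, with all morphisms adjacency-preserving. $\mathcal A$-sets are presheaves on $\mathcal A$; $\mathcal A[p]=\mathcal A(-,[p])$, $\partial\mathcal A[p]$ its subpresheaf of cubes of dimension $<p$. $\mathcal L_\mathcal A$ is the left adjoint of restriction along $\square\subset\mathcal A$. For a set $\Sigma$, $!\Sigma$ is the precubical set with $(!\Sigma)_0=\{()\}$, $(!\Sigma)_n=\Sigma^n$, $\partial_i^0=\partial_i^1$ deleting the $i$-th letter. $\mathrm{sh}_\mathcal A$ is left adjoint to the inclusion of the full subcategory of $\mathcal A$-sets orthogonal to the maps $\mathcal A[p]\sqcup_{\partial\mathcal A[p]}\mathcal A[p]\to\mathcal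 A[p]$, $p\ge2$. A labelled $\mathcal A$-set (over $\Sigma$) is an object of the slice category of $\mathcal A$-sets over $\mathrm{sh}_\mathcal A\mathcal L_\mathcal A(!\Sigma)$. *)

theory Defs
  imports "HOL-Library.FuncSet"
begin

text \<open>The cube [n] = {0,1}^n, elements encoded as boolean lists of length n
  (False = 0, True = 1), with the product order.\<close>
definition cube :: "nat \<Rightarrow> bool list set" where
  "cube n = {xs. length xs = n}"

definition cleq :: "bool list \<Rightarrow> bool list \<Rightarrow> bool" where
  "cleq xs ys \<longleftrightarrow> list_all2 (\<le>) xs ys"

definition cless :: "bool list \<Rightarrow> bool list \<Rightarrow> bool" where
  "cless xs ys \<longleftrightarrow> cleq xs ys \<and> xs \<noteq> ys"

definition hamming1 :: "bool list \<Rightarrow> bool list \<Rightarrow> bool" where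
  "hamming1 xs ys \<longleftrightarrow> length xs = length ys \<and>
     card {i. i < length xs \<and> xs ! i \<noteq> ys ! i} = 1"

text \<open>A map [n] -> [m]: triple (n, m, f), f extensional on [n].\<close>
type_synonym cmor = "nat \<times> nat \<times> (bool list \<Rightarrow> bool list)"

definition mdom :: "cmor \<Rightarrow> nat" where "mdom f = fst f"
definition mcod :: "cmor \<Rightarrow> nat" where "mcod f = fst (snd f)"
definition mfun :: "cmor \<Rightarrow> bool list \<Rightarrow> bool list" where "mfun f = snd (snd f)"

text \<open>Morphisms of PoSet between cubes: strictly increasing maps.\<close>
definition strict_mor :: "cmor \<Rightarrow> bool" where
  "strict_mor f \<longleftrightarrow> mfun f \<in> cube (mdom f) \<rightarrow>\<^sub>E cube (mcod f) \<and>
     (\<forall>x\<in>cube (mdom f). \<forall>y\<in>cube (mdom f). cless x y \<longrightarrow> cless (mfun f x) (mfun f y))"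

definition adj_pres :: "cmor \<Rightarrow> bool" where
  "adj_pres f \<longleftrightarrow> strict_mor f \<and>
     (\<forall>x\<in>cube (mdom f). \<forall>y\<in>cube (mdom f). hamming1 x y \<longrightarrow> hamming1 (mfun f x) (mfun f y))"

definition idm :: "nat \<Rightarrow> cmor" where
  "idm n = (n, n, restrict id (cube n))"

definition comp :: "cmor \<Rightarrow> cmor \<Rightarrow> cmor" where
  "comp g f = (mdom f, mcod g, restrict (mfun g \<circ> mfun f) (cube (mdom f)))"

text \<open>Face map delta_i^alpha : [n-1] -> [n], inserting alpha at position i (1 <= i <= n).\<close>
definition face :: "nat \<Rightarrow> nat \<Rightarrow> bool \<Rightarrow> cmor" where
  "face n i \<alpha> = (n - 1, n, restrict (\<lambda>xs. take (i - 1) xs @ \<alpha> # drop (i - 1) xs) (cube (n - 1)))"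

text \<open>A category of cubes, given by its set of morphisms: a subcategory of PoSet with
  objects all [n], containing all face maps (hence the box category), all of whose
  morphisms are adjacency-preserving.\<close>
definition cube_category :: "cmor set \<Rightarrow> bool" where
  "cube_category A \<longleftrightarrow>
     (\<forall>f\<in>A. strict_mor f \<and> adj_pres f) \<and>
     (\<forall>n. idm n \<in> A) \<and>
     (\<forall>f\<in>A. \<forall>g\<in>A. mcod f = mdom g \<longrightarrow> comp g f \<in> A) \<and>
     (\<forall>n i \<alpha>. 1 \<le> i \<and> i \<le> n \<longrightarrow> face n i \<alpha> \<in> A)"

text \<open>A-sets (presheaves on A): carriers X n and contravariant action act f : X (mcod f) -> X (mdom f).\<close>
definition aset :: "cmor set \<Rightarrow> (nat \<Rightarrow> 'x set) \<Rightarrow> (cmor \<Rightarrow> 'x \<Rightarrow> 'x) \<Rightarrow> bool" where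
  "aset A X act \<longleftrightarrow>
     (\<forall>f\<in>A. \<forall>x\<in>X (mcod f). act f x \<in> X (mdom f)) \<and>
     (\<forall>n. \<forall>x\<in>X n. act (idm n) x = x) \<and>
     (\<forall>f\<in>A. \<forall>g\<in>A. mcod f = mdom g \<longrightarrow>
        (\<forall>x\<in>X (mcod g). act (comp g f) x = act f (act g x)))"

definition aset_map :: "cmor set \<Rightarrow> (nat \<Rightarrow> 'x set) \<Rightarrow> (cmor \<Rightarrow> 'x \<Rightarrow> 'x)
     \<Rightarrow> (nat \<Rightarrow> 'y set) \<Rightarrow> (cmor \<Rightarrow> 'y \<Rightarrow> 'y) \<Rightarrow> (nat \<Rightarrow> 'x \<Rightarrow> 'y) \<Rightarrow> bool" where
  "aset_map A X act Y act' h \<longleftrightarrow>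
     (\<forall>n. \<forall>x\<in>X n. h n x \<in> Y n) \<and>
     (\<forall>f\<in>A. \<forall>x\<in>X (mcod f). h (mdom f) (act f x) = act' f (h (mcod f) x))"

text \<open>Orthogonality to A[p] \<union>_{\<partial>A[p]} A[p] -> A[p] (p >= 2), unfolded via Yoneda:
  two p-cubes agreeing on the boundary (on all cells of \<partial>A[p], i.e. all
  f : [k] -> [p] in A with k < p) are equal.\<close>
definition separated :: "cmor set \<Rightarrow> (nat \<Rightarrow> 'x set) \<Rightarrow> (cmor \<Rightarrow> 'x \<Rightarrow> 'x) \<Rightarrow> bool" where
  "separated A X act \<longleftrightarrow>
     (\<forall>p\<ge>2. \<forall>x\<in>X p. \<forall>y\<in>X p.
        (\<forall>f\<in>A. mcod f = p \<and> mdom f < p \<longrightarrow> act f x = act f y) \<longrightarrow> x = y)"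

text \<open>The precubical set !Sigma: (!Sigma)_n = Sigma^n, face maps delete the i-th letter.\<close>
definition bang :: "'a set \<Rightarrow> nat \<Rightarrow> 'a list set" where
  "bang \<Sigma> n = {w. length w = n \<and> set w \<subseteq> \<Sigma>}"

definition del_letter :: "nat \<Rightarrow> 'a list \<Rightarrow> 'a list" where
  "del_letter i w = take (i - 1) w @ drop i w"

text \<open>Precubical maps !Sigma -> (restriction to the box category of the A-set Y):
  naturality with respect to the generating face maps.\<close>
definition pc_map_bang :: "'a set \<Rightarrow> (nat \<Rightarrow> 'y set) \<Rightarrow> (cmor \<Rightarrow> 'y \<Rightarrow> 'y)
     \<Rightarrow> (nat \<Rightarrow> 'a list \<Rightarrow> 'y) \<Rightarrow> bool" where
  "pc_map_bang \<Sigma> Y act g \<longleftrightarrow>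
     (\<forall>n. \<forall>w\<in>bang \<Sigma> n. g n w \<in> Y n) \<and>
     (\<forall>n i \<alpha> w. 1 \<le> i \<and> i \<le> n \<and> w \<in> bang \<Sigma> n \<longrightarrow>
        act (face n i \<alpha>) (g n w) = g (n - 1) (del_letter i w))"

text \<open>(S, eta) is sh_A L_A(!Sigma) with its unit: the universal arrow from !Sigma to the
  composite right adjoint (separated A-sets -> A-sets -> precubical sets), whose left
  adjoint is sh_A o L_A.  Test objects range over A-sets with carriers in type 'b.\<close>
definition free_sep_on_bang :: "cmor set \<Rightarrow> 'a set \<Rightarrow> (nat \<Rightarrow> 'x set) \<Rightarrow> (cmor \<Rightarrow> 'x \<Rightarrow> 'x)
     \<Rightarrow> (nat \<Rightarrow> 'a list \<Rightarrow> 'x) \<Rightarrow> 'b itself \<Rightarrow> bool" where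
  "free_sep_on_bang A \<Sigma> S actS \<eta> (_::'b itself) \<longleftrightarrow>
     aset A S actS \<and> separated A S actS \<and> pc_map_bang \<Sigma> S actS \<eta> \<and>
     (\<forall>(T::nat \<Rightarrow> 'b set) actT g.
        aset A T actT \<and> separated A T actT \<and> pc_map_bang \<Sigma> T actT g \<longrightarrow>
        (\<exists>h. aset_map A S actS T actT h \<and> (\<forall>n. \<forall>w\<in>bang \<Sigma> n. h n (\<eta> n w) = g n w)) \<and>
        (\<forall>h h'. aset_map A S actS T actT h \<and> (\<forall>n. \<forall>w\<in>bang \<Sigma> n. h n (\<eta> n w) = g n w) \<and>
                aset_map A S actS T actT h' \<and> (\<forall>n. \<forall>w\<in>bang \<Sigma> n. h' n (\<eta> n w) = g n w)
                \<longrightarrow> (\<forall>n. \<forall>x\<in>S n. h n x = h' n x)))"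

definition term_carrier :: "nat \<Rightarrow> unit set" where "term_carrier n = {()}"
definition term_act :: "cmor \<Rightarrow> unit \<Rightarrow> unit" where "term_act f x = ()"

end

theory Submission
  imports Defs
begin

definition emb :: "bool list \<Rightarrow> bool list \<Rightarrow> nat \<Rightarrow> cmor" where
  "emb p q k = (k, length p + k + length q, restrict (\<lambda>xs. p @ xs @ q) (cube k))"

lemma face_act:
  assumes g: "pc_map_bang {\<tau>} T actT g" and "1 \<le> i" "i \<le> n"
  shows "actT (face n i \<alpha>) (g n (replicate n \<tau>)) = g (n - 1) (replicate (n - 1) \<tau>)"
proof -
  have w: "replicate n \<tau> \<in> bang {\<tau>} n" by (auto simp: bang_def)
  have "del_letter i (replicate n \<tau>) = replicate (n - 1) \<tau>"
    using assms(2,3) by (simp add: del_letter_def replicate_add[symmetric])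
  then show ?thesis using g w assms(2,3) unfolding pc_map_bang_def by metis
qed

lemma g_in:
  assumes g: "pc_map_bang {\<tau>} T actT g"
  shows "g n (replicate n \<tau>) \<in> T n"
proof -
  have w: "replicate n \<tau> \<in> bang {\<tau>} n" by (auto simp: bang_def)
  then show ?thesis using g unfolding pc_map_bang_def by blast
qed

lemma emb_cons: "emb (b # p) q k = comp (face (length p + k + length q + 1) 1 b) (emb p q k)"
  unfolding emb_def comp_def face_def mdom_def mcod_def mfun_def
  by (auto simp: cube_def fun_eq_iff)

lemma emb_snoc: "emb [] (q @ [b]) k = comp (face (k + length q + 1) (k + length q + 1) b) (emb [] q k)"
  unfolding emb_def comp_def face_def mdom_def mcod_def mfun_def
  by (auto simp: cube_def fun_eq_iff)

lemma emb_nil: "emb [] [] k = idm k"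
  unfolding emb_def idm_def by (auto simp: fun_eq_iff)

lemma emb_lemma:
  assumes A: "cube_category A" and T: "aset A T actT" and g: "pc_map_bang {\<tau>} T actT g"
  shows "emb p q k \<in> A \<and> actT (emb p q k) (g (length p + k + length q) (replicate (length p + k + length q) \<tau>)) = g k (replicate k \<tau>)"
proof (induction p)
  case Nil
  show ?case
  proof (induction q rule: rev_induct)
    case Nil
    have "g k (replicate k \<tau>) \<in> T k" using g_in[OF g] .
    then show ?case using A T by (simp add: emb_nil cube_category_def aset_def)
  next
    case (snoc b q)
    let ?F = "face (k + length q + 1) (k + length q + 1) b"
    have F: "?F \<in> A" using A by (simp add: cube_category_def)
    have E: "emb [] q k \<in> A" using snoc by simp
    have cc: "mcod (emb [] q k) = mdom ?F" by (simp add: emb_def face_def mcod_def mdom_def)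
    have x: "g (k + length q + 1) (replicate (k + length q + 1) \<tau>) \<in> T (mcod ?F)"
      using g_in[OF g] by (simp add: face_def mcod_def del: replicate_Suc)
    have "actT (comp ?F (emb [] q k)) (g (k + length q + 1) (replicate (k + length q + 1) \<tau>))
       = actT (emb [] q k) (actT ?F (g (k + length q + 1) (replicate (k + length q + 1) \<tau>)))"
      using T E F cc x unfolding aset_def by blast
    also have "\<dots> = g k (replicate k \<tau>)"
      using face_act[OF g, of "k + length q + 1" "k + length q + 1" b] snoc by simp
    finally show ?case using A E F cc by (simp add: emb_snoc cube_category_def)
  qed
next
  case (Cons b p)
  let ?F = "face (length p + k + length q + 1) 1 b"
  have F: "?F \<in> A" using A by (simp add: cube_category_def)
  have E: "emb p q k \<in> A" using Cons by simp
  have cc: "mcod (emb p q k) = mdom ?F" by (simp add: emb_def face_def mcod_def mdom_def)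
  have x: "g (length p + k + length q + 1) (replicate (length p + k + length q + 1) \<tau>) \<in> T (mcod ?F)"
    using g_in[OF g] by (simp add: face_def mcod_def del: replicate_Suc)
  have "actT (comp ?F (emb p q k)) (g (length p + k + length q + 1) (replicate (length p + k + length q + 1) \<tau>))
     = actT (emb p q k) (actT ?F (g (length p + k + length q + 1) (replicate (length p + k + length q + 1) \<tau>)))"
    using T E F cc x unfolding aset_def by blast
  also have "\<dots> = g k (replicate k \<tau>)"
    using face_act[OF g, of 1 "length p + k + length q + 1" b] Cons by simp
  finally show ?case using A E F cc by (simp add: emb_cons cube_category_def)
qed


lemma mor_split: "f = (mdom f, mcod f, mfun f)"
  by (simp add: mdom_def mcod_def mfun_def)

lemma dim0:
  assumes A: "cube_category A" and T: "aset A T actT" and g: "pc_map_bang {\<tau>} T actT g"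
    and f: "f \<in> A" "mdom f = 0"
  shows "actT f (g (mcod f) (replicate (mcod f) \<tau>)) = g 0 (replicate 0 \<tau>)"
proof -
  have sm: "strict_mor f" using A f by (simp add: cube_category_def)
  then have fe: "mfun f \<in> cube 0 \<rightarrow>\<^sub>E cube (mcod f)" using f by (simp add: strict_mor_def)
  define v where "v = mfun f []"
  have lv: "length v = mcod f" using fe by (auto simp: v_def cube_def)
  have "mfun f = restrict (\<lambda>xs. v @ xs @ []) (cube 0)"
  proof
    fix xs show "mfun f xs = restrict (\<lambda>xs. v @ xs @ []) (cube 0) xs"
      using fe by (cases "xs \<in> cube 0") (auto simp: v_def cube_def)
  qed
  then have "f = emb v [] 0" using lv f by (subst mor_split) (simp add: emb_def)
  then show ?thesis using emb_lemma[OF A T g, of v "[]" 0] lv by simp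
qed

lemma dim1:
  assumes A: "cube_category A" and T: "aset A T actT" and g: "pc_map_bang {\<tau>} T actT g"
    and f: "f \<in> A" "mdom f = 1"
  shows "actT f (g (mcod f) (replicate (mcod f) \<tau>)) = g 1 (replicate 1 \<tau>)"
proof -
  have ap: "adj_pres f" using A f by (simp add: cube_category_def)
  then have sm: "strict_mor f" by (simp add: adj_pres_def)
  then have fe: "mfun f \<in> cube 1 \<rightarrow>\<^sub>E cube (mcod f)" using f by (simp add: strict_mor_def)
  define u where "u = mfun f [False]"
  define w where "w = mfun f [True]"
  have c0: "[False] \<in> cube 1" "[True] \<in> cube 1" by (auto simp: cube_def)
  have lu: "length u = mcod f" and lw: "length w = mcod f"
    using fe c0 by (auto simp: u_def w_def cube_def)
  have "cless [False] [True]" by (simp add: cless_def cleq_def)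
  then have cl: "cless u w" using sm f c0 by (simp add: strict_mor_def u_def w_def)
  have "{i. i < length [False] \<and> [False] ! i \<noteq> [True] ! i} = {0}" by auto
  then have "hamming1 [False] [True]" by (simp add: hamming1_def)
  then have "hamming1 u w" using ap f c0 by (simp add: adj_pres_def u_def w_def)
  then obtain i where hi: "{j. j < length u \<and> u ! j \<noteq> w ! j} = {i}"
    by (auto simp: hamming1_def card_1_singleton_iff)
  have il: "i < length u" and ne: "u ! i \<noteq> w ! i" using hi by auto
  have eq: "\<And>j. j < length u \<Longrightarrow> j \<noteq> i \<Longrightarrow> u ! j = w ! j" using hi by blast
  have la: "list_all2 (\<le>) u w" using cl by (simp add: cless_def cleq_def)
  have "u ! i \<le> w ! i" using list_all2_nthD[OF la il] .
  then have ui: "u ! i = False" and wi: "w ! i = True" using ne by auto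
  define p where "p = take i u"
  define q where "q = drop (Suc i) u"
  have up: "u = p @ [False] @ q" using id_take_nth_drop[OF il] ui
    by (simp add: p_def q_def)
  have tw: "take i w = p" using eq il lu lw by (intro nth_equalityI) (auto simp: p_def)
  have dw: "drop (Suc i) w = q" using eq il lu lw by (intro nth_equalityI) (auto simp: q_def)
  have ilw: "i < length w" using il lu lw by simp
  have wp: "w = p @ [True] @ q" using id_take_nth_drop[OF ilw] wi
    by (simp add: tw dw)
  have len: "length p + 1 + length q = mcod f" using up lu by simp
  have "mfun f = restrict (\<lambda>xs. p @ xs @ q) (cube 1)"
  proof
    fix xs show "mfun f xs = restrict (\<lambda>xs. p @ xs @ q) (cube 1) xs"
    proof (cases "xs \<in> cube 1")
      case True
      then obtain b where "xs = [b]" by (cases xs) (auto simp: cube_def)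
      then show ?thesis using up wp True by (cases b) (auto simp: u_def w_def)
    next
      case False then show ?thesis using fe by auto
    qed
  qed
  then have "f = emb p q 1" using len f by (subst mor_split) (simp add: emb_def)
  then show ?thesis using emb_lemma[OF A T g, of p q 1] len by (simp del: replicate_Suc)
qed

lemma key:
  assumes A: "cube_category A" and T: "aset A T actT" and g: "pc_map_bang {\<tau>} T actT g"
    and S: "separated A T actT"
  shows "f \<in> A \<Longrightarrow> actT f (g (mcod f) (replicate (mcod f) \<tau>)) = g (mdom f) (replicate (mdom f) \<tau>)"
proof (induction "mdom f" arbitrary: f rule: less_induct)
  case less
  show ?case
  proof (cases "mdom f < 2")
    case True
    then consider "mdom f = 0" | "mdom f = 1" by linarith
    then show ?thesis
      using dim0[OF A T g less.prems] dim1[OF A T g less.prems] by cases auto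
  next
    case False
    let ?k = "mdom f"
    let ?x = "actT f (g (mcod f) (replicate (mcod f) \<tau>))"
    let ?y = "g ?k (replicate ?k \<tau>)"
    have xin: "?x \<in> T ?k" using T less.prems g_in[OF g] unfolding aset_def by blast
    have yin: "?y \<in> T ?k" using g_in[OF g] .
    have "\<forall>e\<in>A. mcod e = ?k \<and> mdom e < ?k \<longrightarrow> actT e ?x = actT e ?y"
    proof (intro ballI impI)
      fix e assume e: "e \<in> A" "mcod e = ?k \<and> mdom e < ?k"
      have ce: "comp f e \<in> A" using A e less.prems by (simp add: cube_category_def)
      have dce: "mdom (comp f e) = mdom e" "mcod (comp f e) = mcod f"
        by (simp_all add: comp_def mdom_def mcod_def)
      have "actT e ?x = actT (comp f e) (g (mcod f) (replicate (mcod f) \<tau>))"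
        using T e less.prems g_in[OF g] unfolding aset_def by (metis)
      also have "\<dots> = g (mdom e) (replicate (mdom e) \<tau>)"
        using less.hyps[of "comp f e"] ce dce e by simp
      also have "\<dots> = actT e ?y" using less.hyps[of e] e by simp
      finally show "actT e ?x = actT e ?y" .
    qed
    moreover have k2: "2 \<le> ?k" using False by simp
    ultimately show ?thesis using S[unfolded separated_def, rule_format, OF k2 xin yin] by blast
  qed
qed

lemma univ_part:
  fixes A :: "cmor set" and \<tau> :: 'a and T :: "nat \<Rightarrow> 'b set"
  assumes A: "cube_category A" and T: "aset A T actT" and S: "separated A T actT"
    and G: "pc_map_bang {\<tau>} T actT g"
  shows "(\<exists>h. aset_map A term_carrier term_act T actT h \<and> (\<forall>n. \<forall>w\<in>bang {\<tau>} n. h n (() ) = g n w)) \<and>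
        (\<forall>h h'. aset_map A term_carrier term_act T actT h \<and> (\<forall>n. \<forall>w\<in>bang {\<tau>} n. h n () = g n w) \<and>
                aset_map A term_carrier term_act T actT h' \<and> (\<forall>n. \<forall>w\<in>bang {\<tau>} n. h' n () = g n w)
                \<longrightarrow> (\<forall>n. \<forall>x\<in>term_carrier n. h n x = h' n x))"
proof
  have bw: "\<And>n w. w \<in> bang {\<tau>} n \<longleftrightarrow> w = replicate n \<tau>"
    by (auto simp: bang_def intro: replicate_eqI)
  show "\<exists>h. aset_map A term_carrier term_act T actT h \<and> (\<forall>n. \<forall>w\<in>bang {\<tau>} n. h n () = g n w)"
  proof (intro exI conjI)
    show "aset_map A term_carrier term_act T actT (\<lambda>n x. g n (replicate n \<tau>))"
      using key[OF A T G S] g_in[OF G] by (simp add: aset_map_def term_act_def)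
    show "\<forall>n. \<forall>w\<in>bang {\<tau>} n. g n (replicate n \<tau>) = g n w" using bw by simp
  qed
  show "\<forall>h h'. aset_map A term_carrier term_act T actT h \<and> (\<forall>n. \<forall>w\<in>bang {\<tau>} n. h n () = g n w) \<and>
           aset_map A term_carrier term_act T actT h' \<and> (\<forall>n. \<forall>w\<in>bang {\<tau>} n. h' n () = g n w) \<longrightarrow>
           (\<forall>n. \<forall>x\<in>term_carrier n. h n x = h' n x)"
    using bw by (auto simp: term_carrier_def)
qed

theorem proposition4p25:
  fixes A :: "cmor set" and \<tau> :: 'a
  assumes "cube_category A"
  shows "free_sep_on_bang A {\<tau>} term_carrier term_act (\<lambda>n w. ()) TYPE('b)"
proof -
  have 1: "aset A term_carrier term_act" by (simp add: aset_def term_carrier_def term_act_def)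
  have 2: "separated A term_carrier term_act" by (simp add: separated_def term_carrier_def)
  have 3: "pc_map_bang {\<tau>} term_carrier term_act (\<lambda>n w. ())"
    by (simp add: pc_map_bang_def term_carrier_def term_act_def)
  have U: "\<forall>(T::nat \<Rightarrow> 'b set) actT g.
        aset A T actT \<and> separated A T actT \<and> pc_map_bang {\<tau>} T actT g \<longrightarrow>
        (\<exists>h. aset_map A term_carrier term_act T actT h \<and> (\<forall>n. \<forall>w\<in>bang {\<tau>} n. h n ((\<lambda>n w. ()) n w) = g n w)) \<and>
        (\<forall>h h'. aset_map A term_carrier term_act T actT h \<and> (\<forall>n. \<forall>w\<in>bang {\<tau>} n. h n ((\<lambda>n w. ()) n w) = g n w) \<and>
                aset_map A term_carrier term_act T actT h' \<and> (\<forall>n. \<forall>w\<in>bang {\<tau>} n. h' n ((\<lambda>n w. ()) n w) = g n w)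
                \<longrightarrow> (\<forall>n. \<forall>x\<in>term_carrier n. h n x = h' n x))"
  proof (intro allI impI)
    fix T :: "nat \<Rightarrow> 'b set" and actT g
    assume H: "aset A T actT \<and> separated A T actT \<and> pc_map_bang {\<tau>} T actT g"
    show "(\<exists>h. aset_map A term_carrier term_act T actT h \<and> (\<forall>n. \<forall>w\<in>bang {\<tau>} n. h n ((\<lambda>n w. ()) n w) = g n w)) \<and>
        (\<forall>h h'. aset_map A term_carrier term_act T actT h \<and> (\<forall>n. \<forall>w\<in>bang {\<tau>} n. h n ((\<lambda>n w. ()) n w) = g n w) \<and>
                aset_map A term_carrier term_act T actT h' \<and> (\<forall>n. \<forall>w\<in>bang {\<tau>} n. h' n ((\<lambda>n w. ()) n w) = g n w)
                \<longrightarrow> (\<forall>n. \<forall>x\<in>term_carrier n. h n x = h' n x))"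
      using univ_part[OF assms, of T actT \<tau> g] H by simp
  qed
  show ?thesis unfolding free_sep_on_bang_def using 1 2 3 U by (intro conjI)
qed

end
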